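(* Let $\alpha,\beta>0$, $\gamma\ge0$, let $I$, $X$ and $\eta_0=\inf\{I(u,f):(u,f)\in X\}$ be as in the context. Let $\{(u_n,f_n)\}\subset X$ be a minimizing sequence for $\eta_0$ such that $0\le u_n\le1$, $0\le f_n\le 1$ on $(0,\infty)$, and for each $n$, $f_n(r)=0$ for $0<r\le\frac1n$ and $f_n$ solves $$f_n''=-\frac{2}{r}f_n'+\frac{\beta}{r^{2}}f_n u_n^{2}+\gamma f_n(f_n^{2}-1)\quad\text{on } \big(\tfrac1n,\infty\big).$$ Suppose $u,f\in W^{1,2}_{\mathrm{loc}}(0,\infty)$ are such that $u_n\to u$ and $f_n\to f$ weakly in $W^{1,2}(a,b)$ and uniformly on $[a,b]$ for every $0<a<b<\infty$. Then $\lim_{r\to0}f(r)=0$.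
   Context: For real parameters $\alpha,\beta>0$, $\gamma\ge0$, $$I(u,f)=\int_{0}^{\infty} \Big\{2(u')^{2}+\frac{(1-u^{2})^{2}}{r^{2}}+\alpha\big[ r^{2}(f')^{2}+\beta f^{2}u^{2}\big]+\frac{\alpha\gamma}{2}r^{2}(f^{2}-1)^{2}\Big\}\,dr,$$ and $X$ is the set of pairs $(u,f)$ of real functions on $(0,\infty)$, absolutely continuous on every compact subinterval of $(0,\infty)$, with $I(u,f)<\infty$ and $\lim_{r\to0}f(r)=0$, $\lim_{r\to0}u(r)=1$, $\lim_{r\to\infty}f(r)=1$, $\lim_{r\to\infty}u(r)=0$. *)

theory Defs
  imports "HOL-Analysis.Analysis"
begin

definition abs_cont_on :: "real set \<Rightarrow> (real \<Rightarrow> real) \<Rightarrow> bool" where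
  "abs_cont_on S g \<longleftrightarrow>
     (\<forall>e>0. \<exists>d>0. \<forall>(m::nat) (a::nat \<Rightarrow> real) (b::nat \<Rightarrow> real).
        (\<forall>i<m. a i \<in> S \<and> b i \<in> S \<and> {a i..b i} \<subseteq> S \<and> a i \<le> b i) \<and>
        (\<forall>i<m. \<forall>j<m. i \<noteq> j \<longrightarrow> b i \<le> a j \<or> b j \<le> a i) \<and>
        (\<Sum>i<m. b i - a i) < d
        \<longrightarrow> (\<Sum>i<m. \<bar>g (b i) - g (a i)\<bar>) < e)"

definition loc_AC :: "(real \<Rightarrow> real) \<Rightarrow> bool" where
  "loc_AC g \<longleftrightarrow> (\<forall>a b. 0 < a \<longrightarrow> a \<le> b \<longrightarrow> abs_cont_on {a..b} g)"

text \<open>The energy functional I(u,f) (integrand is nonnegative; value in [0,inf]).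
  The derivative of an absolutely continuous function is its a.e. derivative.\<close>
definition energy :: "real \<Rightarrow> real \<Rightarrow> real \<Rightarrow> (real \<Rightarrow> real) \<Rightarrow> (real \<Rightarrow> real) \<Rightarrow> ennreal" where
  "energy \<alpha> \<beta> \<gamma> u f =
     (\<integral>\<^sup>+ r. ennreal (2 * (deriv u r)\<^sup>2 + (1 - (u r)\<^sup>2)\<^sup>2 / r\<^sup>2
            + \<alpha> * (r\<^sup>2 * (deriv f r)\<^sup>2 + \<beta> * (f r)\<^sup>2 * (u r)\<^sup>2)
            + \<alpha> * \<gamma> / 2 * r\<^sup>2 * ((f r)\<^sup>2 - 1)\<^sup>2) * indicator {0<..} r \<partial>lebesgue)"

definition admissible :: "real \<Rightarrow> real \<Rightarrow> real \<Rightarrow> ((real \<Rightarrow> real) \<times> (real \<Rightarrow> real)) set" where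
  "admissible \<alpha> \<beta> \<gamma> = {(u, f). loc_AC u \<and> loc_AC f \<and> energy \<alpha> \<beta> \<gamma> u f < \<infinity> \<and>
      (f \<longlongrightarrow> 0) (at_right 0) \<and> (u \<longlongrightarrow> 1) (at_right 0) \<and>
      (f \<longlongrightarrow> 1) at_top \<and> (u \<longlongrightarrow> 0) at_top}"

definition eta0 :: "real \<Rightarrow> real \<Rightarrow> real \<Rightarrow> ennreal" where
  "eta0 \<alpha> \<beta> \<gamma> = Inf ((\<lambda>(u, f). energy \<alpha> \<beta> \<gamma> u f) ` admissible \<alpha> \<beta> \<gamma>)"

definition L2_on :: "real \<Rightarrow> real \<Rightarrow> (real \<Rightarrow> real) \<Rightarrow> bool" where
  "L2_on a b g \<longleftrightarrow> g \<in> borel_measurable lebesgue \<and> set_integrable lebesgue {a..b} (\<lambda>x. (g x)\<^sup>2)"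

text \<open>W^{1,2}_loc(0,inf), represented by its (locally) absolutely continuous representative.\<close>
definition W12_loc :: "(real \<Rightarrow> real) \<Rightarrow> bool" where
  "W12_loc g \<longleftrightarrow> loc_AC g \<and> (\<forall>a b. 0 < a \<longrightarrow> a < b \<longrightarrow> L2_on a b (deriv g))"

text \<open>Weak convergence in W^{1,2}(a,b): since every bounded linear functional on W^{1,2}(a,b)
  has the form v \<mapsto> int v g0 + int v' g1 with g0, g1 in L^2(a,b), this is weak
  L^2 convergence of the functions and of their derivatives.\<close>
definition weak_W12_conv :: "real \<Rightarrow> real \<Rightarrow> (nat \<Rightarrow> real \<Rightarrow> real) \<Rightarrow> (real \<Rightarrow> real) \<Rightarrow> bool" where
  "weak_W12_conv a b vs v \<longleftrightarrow>
     (\<forall>g. L2_on a b g \<longrightarrow>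
        (\<lambda>n. set_lebesgue_integral lebesgue {a..b} (\<lambda>x. vs n x * g x))
           \<longlonglongrightarrow> set_lebesgue_integral lebesgue {a..b} (\<lambda>x. v x * g x) \<and>
        (\<lambda>n. set_lebesgue_integral lebesgue {a..b} (\<lambda>x. deriv (vs n) x * g x))
           \<longlonglongrightarrow> set_lebesgue_integral lebesgue {a..b} (\<lambda>x. deriv v x * g x))"

end

theory Submission
  imports Defs
begin

lemma abs_cont_cont:
  assumes "abs_cont_on {a..b} g"
  shows "continuous_on {a..b} g"
  unfolding continuous_on_iff
proof (intro ballI allI impI)
  fix x e :: real assume x: "x \<in> {a..b}" and e: "0 < e"
  obtain d where d: "d > 0" and H: "\<forall>(m::nat) (aa::nat \<Rightarrow> real) (bb::nat \<Rightarrow> real).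
        (\<forall>i<m. aa i \<in> {a..b} \<and> bb i \<in> {a..b} \<and> {aa i..bb i} \<subseteq> {a..b} \<and> aa i \<le> bb i) \<and>
        (\<forall>i<m. \<forall>j<m. i \<noteq> j \<longrightarrow> bb i \<le> aa j \<or> bb j \<le> aa i) \<and>
        (\<Sum>i<m. bb i - aa i) < d
        \<longrightarrow> (\<Sum>i<m. \<bar>g (bb i) - g (aa i)\<bar>) < e"
    using assms e unfolding abs_cont_on_def by blast
  show "\<exists>d>0. \<forall>x'\<in>{a..b}. dist x' x < d \<longrightarrow> dist (g x') (g x) < e"
  proof (intro exI[of _ d] conjI ballI impI d)
    fix y assume y: "y \<in> {a..b}" and dy: "dist y x < d"
    have H1: "(\<forall>i<(1::nat). (\<lambda>_. min x y) i \<in> {a..b} \<and> (\<lambda>_. max x y) i \<in> {a..b} \<and> {(\<lambda>_. min x y) i..(\<lambda>_. max x y) i} \<subseteq> {a..b} \<and> (\<lambda>_. min x y) i \<le> (\<lambda>_. max x y) i) \<and>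
        (\<forall>i<(1::nat). \<forall>j<1. i \<noteq> j \<longrightarrow> (\<lambda>_. max x y) i \<le> (\<lambda>_. min x y) j \<or> (\<lambda>_. max x y) j \<le> (\<lambda>_. min x y) i) \<and>
        (\<Sum>i<(1::nat). (\<lambda>_. max x y) i - (\<lambda>_. min x y) i) < d"
      using x y dy by (auto simp: dist_real_def)
    have "(\<Sum>i<(1::nat). \<bar>g ((\<lambda>_. max x y) i) - g ((\<lambda>_. min x y) i)\<bar>) < e"
      using mp[OF spec[OF spec[OF spec[OF H, of 1], of "\<lambda>_. min x y"], of "\<lambda>_. max x y"] H1] .
    then have "\<bar>g (max x y) - g (min x y)\<bar> < e" by simp
    then show "dist (g y) (g x) < e"
      by (cases "x \<le> y") (simp_all add: dist_real_def max_def min_def abs_minus_commute)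
  qed
qed

lemma locAC_cont:
  assumes "loc_AC g" "0 < a" "a \<le> b"
  shows "continuous_on {a..b} g"
proof -
  have "abs_cont_on {a..b} g" using assms unfolding loc_AC_def by simp
  then show ?thesis by (rule abs_cont_cont)
qed

lemma energy_bound:
  assumes "\<alpha> > 0" "\<beta> > 0" "\<gamma> \<ge> 0" "0 < a" "a \<le> b" "continuous_on {a..b} u"
  shows "ennreal (integral {a..b} (\<lambda>t. (1 - (u t)\<^sup>2)\<^sup>2 / t\<^sup>2)) \<le> energy \<alpha> \<beta> \<gamma> u f"
proof -
  define g where "g t = (1 - (u t)\<^sup>2)\<^sup>2 / t\<^sup>2" for t
  have gc: "continuous_on {a..b} g"
    unfolding g_def using assms(4) by (auto intro!: continuous_intros assms(6))
  have hi: "(g has_integral integral {a..b} g) {a..b}"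
    using integrable_continuous_interval[OF gc] by (rule integrable_integral)
  have "ennreal (integral {a..b} g) = integral\<^sup>N lborel (\<lambda>x. ennreal (g x) * indicator {a..b} x)"
    apply (rule nn_integral_has_integral_lebesgue'[symmetric])
    subgoal by (simp add: g_def)
    by (rule hi)
  also have "\<dots> \<le> energy \<alpha> \<beta> \<gamma> u f"
    unfolding energy_def nn_integral_completion
  proof (rule nn_integral_mono)
    fix r :: real
    show "ennreal (g r) * indicator {a..b} r \<le> ennreal (2 * (deriv u r)\<^sup>2 + (1 - (u r)\<^sup>2)\<^sup>2 / r\<^sup>2
            + \<alpha> * (r\<^sup>2 * (deriv f r)\<^sup>2 + \<beta> * (f r)\<^sup>2 * (u r)\<^sup>2)
            + \<alpha> * \<gamma> / 2 * r\<^sup>2 * ((f r)\<^sup>2 - 1)\<^sup>2) * indicator {0<..} r"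
    proof (cases "r \<in> {a..b}")
      case True
      then have r: "r > 0" using assms by auto
      have A: "0 \<le> 2 * (deriv u r)\<^sup>2" by simp
      have B: "0 \<le> \<alpha> * (r\<^sup>2 * (deriv f r)\<^sup>2 + \<beta> * (f r)\<^sup>2 * (u r)\<^sup>2)"
        using assms(1,2) by (intro mult_nonneg_nonneg add_nonneg_nonneg) auto
      have C: "0 \<le> \<alpha> * \<gamma> / 2 * r\<^sup>2 * ((f r)\<^sup>2 - 1)\<^sup>2"
        using assms(1,3) by (intro mult_nonneg_nonneg) auto
      have "g r \<le> 2 * (deriv u r)\<^sup>2 + (1 - (u r)\<^sup>2)\<^sup>2 / r\<^sup>2
            + \<alpha> * (r\<^sup>2 * (deriv f r)\<^sup>2 + \<beta> * (f r)\<^sup>2 * (u r)\<^sup>2)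
            + \<alpha> * \<gamma> / 2 * r\<^sup>2 * ((f r)\<^sup>2 - 1)\<^sup>2"
        unfolding g_def using A B C by linarith
      then have E: "ennreal (g r) \<le> ennreal (2 * (deriv u r)\<^sup>2 + (1 - (u r)\<^sup>2)\<^sup>2 / r\<^sup>2
            + \<alpha> * (r\<^sup>2 * (deriv f r)\<^sup>2 + \<beta> * (f r)\<^sup>2 * (u r)\<^sup>2)
            + \<alpha> * \<gamma> / 2 * r\<^sup>2 * ((f r)\<^sup>2 - 1)\<^sup>2)"
        by (rule ennreal_leI)
      have I1: "indicator {a..b} r = (1::ennreal)" using True by simp
      have I2: "indicator {0<..} r = (1::ennreal)" using r by simp
      show ?thesis unfolding I1 I2 using E by simp
    next
      case False
      then have "indicator {a..b} r = (0::ennreal)" by simp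
      then show ?thesis by simp
    qed
  qed
  finally show ?thesis unfolding g_def .
qed

lemma k_nonneg:
  fixes f df u :: "real \<Rightarrow> real" and p s \<beta> \<gamma> :: real
  assumes p: "p > 0" and be: "\<beta> \<ge> 0" and ga: "\<gamma> \<ge> 0" and fp: "f p = 0"
    and cont: "continuous_on {p..s} f"
    and bnd: "\<And>r. r > p \<Longrightarrow> 0 \<le> f r \<and> f r \<le> 1"
    and ode: "\<forall>r > p. (f has_real_derivative df r) (at r) \<and>
                 (df has_real_derivative
                    (- 2 / r * df r + \<beta> / r\<^sup>2 * f r * (u r)\<^sup>2
                     + \<gamma> * f r * ((f r)\<^sup>2 - 1))) (at r)"
    and s: "s > p"
  shows "s\<^sup>2 * df s + \<gamma> * s ^ 3 / 3 \<ge> 0"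
proof (rule ccontr)
  assume neg: "\<not> ?thesis"
  define k where "k r = r\<^sup>2 * df r + \<gamma> * r ^ 3 / 3" for r
  have kd: "(k has_real_derivative (\<beta> * f r * (u r)\<^sup>2 + \<gamma> * r\<^sup>2 * ((f r)^3 - f r + 1))) (at r)"
    if r: "r > p" for r
  proof -
    have d1: "(df has_real_derivative
                    (- 2 / r * df r + \<beta> / r\<^sup>2 * f r * (u r)\<^sup>2
                     + \<gamma> * f r * ((f r)\<^sup>2 - 1))) (at r)" using ode r by blast
    have "(k has_real_derivative (2 * r * df r + r\<^sup>2 * (- 2 / r * df r + \<beta> / r\<^sup>2 * f r * (u r)\<^sup>2
                     + \<gamma> * f r * ((f r)\<^sup>2 - 1)) + \<gamma> * r\<^sup>2)) (at r)"
      unfolding k_def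
      by (rule derivative_eq_intros d1 refl | simp)+
    moreover have "2 * r * df r + r\<^sup>2 * (- 2 / r * df r + \<beta> / r\<^sup>2 * f r * (u r)\<^sup>2
                     + \<gamma> * f r * ((f r)\<^sup>2 - 1)) + \<gamma> * r\<^sup>2
        = \<beta> * f r * (u r)\<^sup>2 + \<gamma> * r\<^sup>2 * ((f r)^3 - f r + 1)"
      using r p by (simp add: field_simps power2_eq_square power3_eq_cube)
    ultimately show ?thesis by simp
  qed
  have kd_nn: "\<beta> * f r * (u r)\<^sup>2 + \<gamma> * r\<^sup>2 * ((f r)^3 - f r + 1) \<ge> 0" if r: "r > p" for r
  proof -
    have f0: "0 \<le> f r" and f1: "f r \<le> 1" using bnd r by auto
    have "0 \<le> (f r)^3" using f0 by simp
    then have "(f r)^3 - f r + 1 \<ge> 0" using f1 by linarith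
    then have "0 \<le> \<gamma> * r\<^sup>2 * ((f r)^3 - f r + 1)" using ga by simp
    moreover have "0 \<le> \<beta> * f r * (u r)\<^sup>2" using be f0 by simp
    ultimately show ?thesis by linarith
  qed
  have kmono: "k x \<le> k y" if xy: "p < x" "x \<le> y" for x y
  proof (rule DERIV_nonneg_imp_increasing_open[OF xy(2)])
    fix z assume "x < z" "z < y"
    then have "p < z" using xy by linarith
    then show "\<exists>w. (k has_real_derivative w) (at z) \<and> 0 \<le> w"
      using kd kd_nn by blast
  next
    show "continuous_on {x..y} k"
    proof (intro continuous_at_imp_continuous_on ballI)
      fix z assume "z \<in> {x..y}"
      then have "p < z" using xy by auto
      then show "isCont k z" by (rule DERIV_isCont[OF kd])
    qed
  qed
  have dneg: "df t < 0" if t: "p < t" "t \<le> s" for t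
  proof -
    have "k t < 0" using kmono[OF t] neg unfolding k_def by simp
    moreover have "0 \<le> \<gamma> * t ^ 3 / 3" using ga t p by simp
    ultimately have "t\<^sup>2 * df t < 0"
      unfolding k_def by linarith
    then show ?thesis using t p by (simp add: mult_less_0_iff)
  qed
  have fdec: "f x > f y" if xy: "p < x" "x < y" "y \<le> s" for x y
  proof (rule DERIV_neg_imp_decreasing[OF xy(2)])
    fix z assume "x \<le> z" "z \<le> y"
    then have z: "p < z" "z \<le> s" using xy by linarith+
    then show "\<exists>w. (f has_real_derivative w) (at z) \<and> w < 0"
      using ode dneg by blast
  qed
  define m where "m = (p + s) / 2"
  have m: "p < m" "m < s" using s unfolding m_def by auto
  have fm: "f m > 0" using fdec[OF m(1) m(2)] bnd[OF s] by simp
  obtain d where d: "d > 0" and dH: "\<And>t. t \<in> {p..s} \<Longrightarrow> dist t p < d \<Longrightarrow> dist (f t) (f p) < f m"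
  proof -
    have "\<forall>x\<in>{p..s}. \<forall>e>0. \<exists>d>0. \<forall>x'\<in>{p..s}. dist x' x < d \<longrightarrow> dist (f x') (f x) < e"
      using cont unfolding continuous_on_iff .
    moreover have "p \<in> {p..s}" using s by simp
    ultimately have "\<forall>e>0. \<exists>d>0. \<forall>x'\<in>{p..s}. dist x' p < d \<longrightarrow> dist (f x') (f p) < e"
      by (rule bspec)
    then have "\<exists>d>0. \<forall>x'\<in>{p..s}. dist x' p < d \<longrightarrow> dist (f x') (f p) < f m"
      using fm by blast
    then show ?thesis using that by blast
  qed
  define h where "h = min d (m - p)"
  define t where "t = p + h / 2"
  have a1: "h \<le> m - p" unfolding h_def by simp
  have a2: "h > 0" unfolding h_def using d m by simp
  have a3: "h \<le> d" unfolding h_def by simp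
  have t1: "p < t" unfolding t_def using a2 by linarith
  have t2: "t < m" unfolding t_def using a1 a2 by linarith
  have t3: "t - p < d" unfolding t_def using a3 a2 by linarith
  note t = t1 t2 t3
  have "dist (f t) (f p) < f m" using dH t m d unfolding t_def by (auto simp: dist_real_def)
  then have "f t < f m" using fp by (simp add: dist_real_def)
  moreover have "f t > f m" using fdec[OF t(1) t(2)] m by simp
  ultimately show False by simp
qed

lemma main_single:
  fixes f df u :: "real \<Rightarrow> real" and p \<beta> \<gamma> \<epsilon> M \<rho> a :: real
  assumes p: "p > 0" and be: "\<beta> > 0" and ga: "\<gamma> \<ge> 0" and fp: "f p = 0"
    and cont: "\<And>q. p \<le> q \<Longrightarrow> continuous_on {p..q} f"
    and ucont: "\<And>x y. p < x \<Longrightarrow> x \<le> y \<Longrightarrow> continuous_on {x..y} u"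
    and bnd: "\<And>r. r > p \<Longrightarrow> 0 \<le> f r \<and> f r \<le> 1"
    and ode: "\<forall>r > p. (f has_real_derivative df r) (at r) \<and>
                 (df has_real_derivative
                    (- 2 / r * df r + \<beta> / r\<^sup>2 * f r * (u r)\<^sup>2
                     + \<gamma> * f r * ((f r)\<^sup>2 - 1))) (at r)"
    and Mb: "\<And>x y. p < x \<Longrightarrow> x \<le> y \<Longrightarrow> integral {x..y} (\<lambda>t. (1 - (u t)\<^sup>2)\<^sup>2 / t\<^sup>2) \<le> M"
    and M: "M \<ge> 1" and ep: "\<epsilon> > 0"
    and r0: "\<rho> > 0" "\<rho> \<le> 1" "16 * M * \<rho> \<le> 1" "(\<gamma> + 1) * \<rho> \<le> \<epsilon>" "64 * ((\<gamma> + 1) * \<rho>) \<le> \<beta> * \<epsilon>"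
    and a: "p < a" "a < \<rho> * exp (- (64 / (\<beta> * \<epsilon>))) / 2" "f a \<ge> \<epsilon> / 2"
  shows False
proof -
  define c1 where "c1 = \<beta> * \<epsilon> / 4"
  define c where "c = \<beta> * \<epsilon> / 64"
  have c1p: "c1 > 0" and cp: "c > 0" unfolding c1_def c_def using be ep by auto
  have ex1: "exp (- (64 / (\<beta> * \<epsilon>))) < 1" using be ep by simp
  have "\<rho> * exp (- (64 / (\<beta> * \<epsilon>))) < \<rho>" using ex1 r0(1) by simp
  then have a2: "2 * a < \<rho>" using a(2) by linarith
  have apos: "a > 0" using a p by linarith
  have klb: "x\<^sup>2 * df x + \<gamma> * x ^ 3 / 3 \<ge> 0" if "p < x" for x
    by (rule k_nonneg[OF p be[THEN less_imp_le] ga fp cont[of x] bnd ode]) (use that in auto)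
  have dflb: "df x + \<gamma> * x / 3 \<ge> 0" if x: "p < x" for x
  proof -
    have "x\<^sup>2 * (df x + \<gamma> * x / 3) = x\<^sup>2 * df x + \<gamma> * x ^ 3 / 3"
      by (simp add: algebra_simps power2_eq_square power3_eq_cube)
    then have "x\<^sup>2 * (df x + \<gamma> * x / 3) \<ge> 0" using klb[OF x] by simp
    moreover have "x\<^sup>2 > 0" using x p by simp
    ultimately show ?thesis by (simp add: zero_le_mult_iff)
  qed
  have fmono: "f a + \<gamma> * a\<^sup>2 / 6 \<le> f r + \<gamma> * r\<^sup>2 / 6" if r: "a \<le> r" for r
  proof -
    have D: "((\<lambda>r. f r + \<gamma> * r\<^sup>2 / 6) has_real_derivative df z + \<gamma> * z / 3) (at z)" if "p < z" for z
    proof -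
      have "(f has_real_derivative df z) (at z)" using ode that by blast
      then have "((\<lambda>r. f r + \<gamma> * r\<^sup>2 / 6) has_real_derivative df z + \<gamma> * (2 * z) / 6) (at z)"
        by (auto intro!: derivative_eq_intros)
      then show ?thesis by simp
    qed
    show ?thesis
    proof (rule DERIV_nonneg_imp_increasing_open[OF r, of "\<lambda>r. f r + \<gamma> * r\<^sup>2 / 6"])
      fix z assume "a < z" "z < r"
      then have "p < z" using a by linarith
      then show "\<exists>y. ((\<lambda>r. f r + \<gamma> * r\<^sup>2 / 6) has_real_derivative y) (at z) \<and> 0 \<le> y"
        using D dflb by blast
    next
      show "continuous_on {a..r} (\<lambda>r. f r + \<gamma> * r\<^sup>2 / 6)"
      proof (intro continuous_at_imp_continuous_on ballI)
        fix z assume "z \<in> {a..r}"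
        then have "p < z" using a by auto
        then show "isCont (\<lambda>r. f r + \<gamma> * r\<^sup>2 / 6) z" by (rule DERIV_isCont[OF D])
      qed
    qed
  qed
  have flow: "f r \<ge> \<epsilon> / 4" if r: "a \<le> r" "r \<le> \<rho>" for r
  proof -
    have rp: "r > 0" using r apos by linarith
    have "r\<^sup>2 \<le> \<rho>\<^sup>2" using r rp by (intro power_mono) auto
    also have "\<rho>\<^sup>2 \<le> \<rho>" using r0 by (simp add: power2_eq_square mult_left_le)
    finally have "r\<^sup>2 \<le> \<rho>" .
    then have "\<gamma> * r\<^sup>2 \<le> \<gamma> * \<rho>" using ga by (rule mult_left_mono)
    also have "\<dots> \<le> (\<gamma> + 1) * \<rho>" using r0 by (simp add: algebra_simps)
    finally have "\<gamma> * r\<^sup>2 \<le> \<epsilon>" using r0 by linarith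
    moreover have "0 \<le> \<gamma> * a\<^sup>2" using ga by simp
    ultimately show ?thesis using fmono[OF r(1)] a(3) ep by linarith
  qed
  define p' where "p' = (p + a) / 2"
  define q where "q = \<rho> + 1"
  have p': "p < p'" "p' < a" using a unfolding p'_def by auto
  have uc: "continuous_on {p'..q} (\<lambda>t. (u t)\<^sup>2)"
    using ucont[of p' q] p' a2 apos unfolding q_def by (intro continuous_intros) auto
  define U where "U x = integral {p'..x} (\<lambda>t. (u t)\<^sup>2)" for x
  have Ud: "(U has_real_derivative (u x)\<^sup>2) (at x)" if x: "p' < x" "x < q" for x
  proof -
    have "(U has_real_derivative (u x)\<^sup>2) (at x within {p'..q})"
      unfolding U_def by (rule integral_has_real_derivative[OF uc]) (use x in auto)
    moreover have "at x within {p'..q} = at x"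
      by (rule at_within_interior) (use x in auto)
    ultimately show ?thesis by simp
  qed
  define K where "K x = x\<^sup>2 * df x - c1 * U x + \<gamma> * x ^ 3 / 3" for x
  have Kd: "(K has_real_derivative (\<beta> * f x * (u x)\<^sup>2 + \<gamma> * x\<^sup>2 * ((f x)^3 - f x + 1) - c1 * (u x)\<^sup>2)) (at x)"
    if x: "p' < x" "x < q" for x
  proof -
    have xp: "x > p" using x p' by linarith
    have d1: "(df has_real_derivative
                    (- 2 / x * df x + \<beta> / x\<^sup>2 * f x * (u x)\<^sup>2
                     + \<gamma> * f x * ((f x)\<^sup>2 - 1))) (at x)" using ode xp by blast
    have d2: "(U has_real_derivative (u x)\<^sup>2) (at x)" by (rule Ud[OF x])
    have D: "(K has_real_derivative (2 * x * df x + x\<^sup>2 * (- 2 / x * df x + \<beta> / x\<^sup>2 * f x * (u x)\<^sup>2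
                     + \<gamma> * f x * ((f x)\<^sup>2 - 1)) - c1 * (u x)\<^sup>2 + \<gamma> * x\<^sup>2)) (at x)"
      unfolding K_def
      by (rule derivative_eq_intros d1 d2 refl | simp)+
    have eq: "2 * x * df x + x\<^sup>2 * (- 2 / x * df x + \<beta> / x\<^sup>2 * f x * (u x)\<^sup>2
                     + \<gamma> * f x * ((f x)\<^sup>2 - 1)) - c1 * (u x)\<^sup>2 + \<gamma> * x\<^sup>2
        = \<beta> * f x * (u x)\<^sup>2 + \<gamma> * x\<^sup>2 * ((f x)^3 - f x + 1) - c1 * (u x)\<^sup>2"
      using xp p by (simp add: field_simps power2_eq_square power3_eq_cube)
    show ?thesis using D unfolding eq .
  qed
  have Kd_nn: "\<beta> * f x * (u x)\<^sup>2 + \<gamma> * x\<^sup>2 * ((f x)^3 - f x + 1) - c1 * (u x)\<^sup>2 \<ge> 0"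
    if x: "a \<le> x" "x \<le> \<rho>" for x
  proof -
    have xp: "x > p" using x a by linarith
    have f0: "0 \<le> f x" and f1: "f x \<le> 1" using bnd xp by auto
    have "0 \<le> (f x)^3" using f0 by simp
    then have "(f x)^3 - f x + 1 \<ge> 0" using f1 by linarith
    then have A: "0 \<le> \<gamma> * x\<^sup>2 * ((f x)^3 - f x + 1)" using ga by simp
    have "f x - \<epsilon> / 4 \<ge> 0" using flow[OF x] by simp
    then have B: "0 \<le> \<beta> * (u x)\<^sup>2 * (f x - \<epsilon> / 4)" using be by simp
    have "\<beta> * (u x)\<^sup>2 * (f x - \<epsilon> / 4) = \<beta> * f x * (u x)\<^sup>2 - c1 * (u x)\<^sup>2"
      unfolding c1_def by (simp add: algebra_simps)
    then show ?thesis using A B by linarith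
  qed
  have Kmono: "K a \<le> K R" if R: "a \<le> R" "R \<le> \<rho>" for R
  proof (rule DERIV_nonneg_imp_increasing_open[OF R(1)])
    fix z assume z: "a < z" "z < R"
    then have "p' < z" "z < q" using p' R unfolding q_def by linarith+
    then show "\<exists>y. (K has_real_derivative y) (at z) \<and> 0 \<le> y"
      using Kd Kd_nn z R by (meson less_imp_le order_trans)
  next
    show "continuous_on {a..R} K"
    proof (intro continuous_at_imp_continuous_on ballI)
      fix z assume "z \<in> {a..R}"
      then have "p' < z" "z < q" using p' R unfolding q_def by auto
      then show "isCont K z" by (rule DERIV_isCont[OF Kd])
    qed
  qed
  have Ulow: "U R - U a \<ge> (R - a) / 2 - 2 * R\<^sup>2 * M" if R: "a \<le> R" "R \<le> \<rho>" for R
  proof -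
    define g where "g t = (1 - (u t)\<^sup>2)\<^sup>2 / t\<^sup>2" for t
    have ucR: "continuous_on {p'..R} (\<lambda>t. (u t)\<^sup>2)"
      by (rule continuous_on_subset[OF uc]) (use R q_def in auto)
    have ucaR: "continuous_on {a..R} u"
      by (rule ucont) (use R a in auto)
    have "integral {p'..a} (\<lambda>t. (u t)\<^sup>2) + integral {a..R} (\<lambda>t. (u t)\<^sup>2) = integral {p'..R} (\<lambda>t. (u t)\<^sup>2)"
      by (rule Henstock_Kurzweil_Integration.integral_combine)
         (use p' R integrable_continuous_interval[OF ucR] in auto)
    then have UE: "U R - U a = integral {a..R} (\<lambda>t. (u t)\<^sup>2)" unfolding U_def by simp
    have gc: "continuous_on {a..R} g"
      unfolding g_def using apos by (auto intro!: continuous_intros ucaR)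
    have gi: "g integrable_on {a..R}" by (rule integrable_continuous_interval[OF gc])
    have u2i: "(\<lambda>t. (u t)\<^sup>2) integrable_on {a..R}"
      by (rule integrable_continuous_interval) (auto intro!: continuous_intros ucaR)
    have hi: "(\<lambda>t. 1 / 2 - 2 * R\<^sup>2 * g t) integrable_on {a..R}"
      by (rule integrable_continuous_interval) (auto intro!: continuous_intros gc)
    have pw: "1 / 2 - 2 * R\<^sup>2 * g t \<le> (u t)\<^sup>2" if t: "t \<in> {a..R}" for t
    proof -
      have tp: "t > 0" using t apos by auto
      define w where "w = (u t)\<^sup>2"
      have sq: "2 * (1 - w)\<^sup>2 + w - 1 / 2 = 2 * (w - 3 / 4)\<^sup>2 + 3 / 8"
        by (simp add: power2_eq_square algebra_simps)
      have "0 \<le> (w - 3 / 4)\<^sup>2" by simp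
      then have w1: "1 / 2 - 2 * (1 - w)\<^sup>2 \<le> w" using sq by linarith
      have "t\<^sup>2 \<le> R\<^sup>2" using t tp by (intro power_mono) auto
      then have "(1 - w)\<^sup>2 / t\<^sup>2 * t\<^sup>2 \<le> (1 - w)\<^sup>2 / t\<^sup>2 * R\<^sup>2"
        by (intro mult_left_mono) auto
      then have "(1 - w)\<^sup>2 \<le> R\<^sup>2 * g t" using tp unfolding g_def w_def by (simp add: mult.commute)
      then show ?thesis using w1 unfolding w_def by linarith
    qed
    have "integral {a..R} (\<lambda>t. 1 / 2 - 2 * R\<^sup>2 * g t) \<le> integral {a..R} (\<lambda>t. (u t)\<^sup>2)"
      by (rule integral_le[OF hi u2i pw])
    moreover have "integral {a..R} (\<lambda>t. 1 / 2 - 2 * R\<^sup>2 * g t) = (R - a) / 2 - 2 * R\<^sup>2 * integral {a..R} g"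
    proof -
      have "integral {a..R} (\<lambda>t. 1 / 2 - 2 * R\<^sup>2 * g t) = integral {a..R} (\<lambda>t. 1 / 2) - integral {a..R} (\<lambda>t. 2 * R\<^sup>2 * g t)"
        by (rule Henstock_Kurzweil_Integration.integral_diff) (auto intro!: integrable_continuous_interval continuous_intros gc)
      then show ?thesis using R by simp
    qed
    moreover have "integral {a..R} g \<le> M" unfolding g_def by (rule Mb) (use a R in auto)
    then have "2 * R\<^sup>2 * integral {a..R} g \<le> 2 * R\<^sup>2 * M" by (intro mult_left_mono) auto
    ultimately show ?thesis using UE by linarith
  qed
  have dfR: "df R \<ge> c / R" if R: "2 * a \<le> R" "R \<le> \<rho>" for R
  proof -
    have aR: "a \<le> R" using R apos by linarith
    have Rp: "R > 0" using R apos by linarith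
    have k1: "K a \<le> K R" by (rule Kmono[OF aR R(2)])
    have k2: "a\<^sup>2 * df a + \<gamma> * a ^ 3 / 3 \<ge> 0" by (rule klb[OF a(1)])
    have Rdiff: "R\<^sup>2 * df R \<ge> c1 * (U R - U a) - \<gamma> * R ^ 3 / 3"
      using k1 k2 unfolding K_def by (simp add: algebra_simps)
    have u1: "U R - U a \<ge> R / 8"
    proof -
      have "R * M \<le> \<rho> * M" using R M by (intro mult_right_mono) auto
      then have "16 * (R * M) \<le> 1" using r0(3) by (simp add: algebra_simps)
      then have "0 \<le> R * (1 / 8 - 2 * R * M)" using Rp by (intro mult_nonneg_nonneg) auto
      then have "2 * R\<^sup>2 * M \<le> R / 8" by (simp add: algebra_simps power2_eq_square)
      moreover have "(R - a) / 2 \<ge> R / 4" using R by (simp add: field_simps)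
      moreover note Ulow[OF aR R(2)]
      ultimately show ?thesis by linarith
    qed
    have g1: "\<gamma> * R ^ 3 / 3 \<le> c1 * R / 48"
    proof -
      have "R\<^sup>2 \<le> \<rho>\<^sup>2" using R Rp by (intro power_mono) auto
      also have "\<rho>\<^sup>2 \<le> \<rho>" using r0 by (simp add: power2_eq_square mult_left_le)
      finally have "R\<^sup>2 \<le> \<rho>" .
      then have "\<gamma> * R\<^sup>2 \<le> \<gamma> * \<rho>" using ga by (rule mult_left_mono)
      also have "\<dots> \<le> (\<gamma> + 1) * \<rho>" using r0 by (simp add: algebra_simps)
      finally have "\<gamma> * R\<^sup>2 \<le> c1 / 16" using r0(5) unfolding c1_def by linarith
      then have "R * (\<gamma> * R\<^sup>2) \<le> R * (c1 / 16)" using Rp by (intro mult_left_mono) auto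
      then show ?thesis by (simp add: power2_eq_square power3_eq_cube algebra_simps)
    qed
    have "c1 * (R / 8) \<le> c1 * (U R - U a)" using u1 c1p by (intro mult_left_mono) auto
    moreover have "c1 * (R / 8) = c1 * R / 8" by simp
    ultimately have "R\<^sup>2 * df R \<ge> c1 * R / 8 - c1 * R / 48" using Rdiff g1 by linarith
    moreover have "c * R = c1 * R / 16" unfolding c_def c1_def by simp
    moreover have "0 \<le> c1 * R" using c1p Rp by simp
    ultimately have "R\<^sup>2 * df R \<ge> c * R" by linarith
    moreover have "R * (R * df R) = R\<^sup>2 * df R" by (simp add: power2_eq_square)
    moreover have "R * c = c * R" by simp
    ultimately have "R * (R * df R) \<ge> R * c" by linarith
    then have "R * df R \<ge> c" using Rp by simp
    then show ?thesis using Rp by (simp add: divide_le_eq mult.commute)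
  qed
  define G where "G r = f r - c * ln r" for r
  have Gd: "(G has_real_derivative df r - c * (1 / r)) (at r)" if r: "p < r" for r
  proof -
    have "(f has_real_derivative df r) (at r)" using ode r by blast
    then show ?thesis unfolding G_def using r p
      by (auto intro!: derivative_eq_intros)
  qed
  have a2p: "p < 2 * a" using a apos by linarith
  have "G (2 * a) \<le> G \<rho>"
  proof (rule DERIV_nonneg_imp_increasing_open[of "2 * a" \<rho>])
    show "2 * a \<le> \<rho>" using a2 by simp
  next
    fix z assume z: "2 * a < z" "z < \<rho>"
    then have "p < z" using a2p by linarith
    moreover have "df z - c * (1 / z) \<ge> 0" using dfR[of z] z by simp
    ultimately show "\<exists>y. (G has_real_derivative y) (at z) \<and> 0 \<le> y" using Gd by blast
  next
    show "continuous_on {2 * a..\<rho>} G"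
    proof (intro continuous_at_imp_continuous_on ballI)
      fix z assume "z \<in> {2 * a..\<rho>}"
      then have "p < z" using a2p by auto
      then show "isCont G z" by (rule DERIV_isCont[OF Gd])
    qed
  qed
  then have Gi: "f (2 * a) + c * (ln \<rho> - ln (2 * a)) \<le> f \<rho>" unfolding G_def by (simp add: algebra_simps)
  have "ln (2 * a) < ln (\<rho> * exp (- (64 / (\<beta> * \<epsilon>))))"
    using a(2) apos r0(1) by (subst ln_less_cancel_iff) auto
  also have "\<dots> = ln \<rho> - 64 / (\<beta> * \<epsilon>)" using r0(1) by (simp add: ln_mult)
  finally have "ln \<rho> - ln (2 * a) > 64 / (\<beta> * \<epsilon>)" by simp
  then have "c * (ln \<rho> - ln (2 * a)) > c * (64 / (\<beta> * \<epsilon>))" using cp by (rule mult_strict_left_mono)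
  moreover have "c * (64 / (\<beta> * \<epsilon>)) = 1" unfolding c_def using be ep by simp
  moreover have "f (2 * a) \<ge> 0" using bnd a2p by blast
  moreover have "f \<rho> \<le> 1" using bnd a2p a2 by (meson less_trans)
  ultimately show False using Gi by linarith
qed

theorem lemma3p2:
  fixes \<alpha> \<beta> \<gamma> :: real
    and us fs :: "nat \<Rightarrow> real \<Rightarrow> real"
    and u f :: "real \<Rightarrow> real"
  assumes "\<alpha> > 0" and "\<beta> > 0" and "\<gamma> \<ge> 0"
    and inX: "\<And>n. (us n, fs n) \<in> admissible \<alpha> \<beta> \<gamma>"
    and minimizing: "(\<lambda>n. energy \<alpha> \<beta> \<gamma> (us n) (fs n)) \<longlonglongrightarrow> eta0 \<alpha> \<beta> \<gamma>"
    and bounds: "\<And>n r. r > 0 \<Longrightarrow> 0 \<le> us n r \<and> us n r \<le> 1 \<and> 0 \<le> fs n r \<and> fs n r \<le> 1"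
    and zero_near_0: "\<And>n r. n \<ge> 1 \<Longrightarrow> 0 < r \<Longrightarrow> r \<le> 1 / real n \<Longrightarrow> fs n r = 0"
    and ode: "\<And>n. n \<ge> 1 \<Longrightarrow> \<exists>df. \<forall>r > 1 / real n.
                 (fs n has_real_derivative df r) (at r) \<and>
                 (df has_real_derivative
                    (- 2 / r * df r + \<beta> / r\<^sup>2 * fs n r * (us n r)\<^sup>2
                     + \<gamma> * fs n r * ((fs n r)\<^sup>2 - 1))) (at r)"
    and "W12_loc u" and "W12_loc f"
    and weak: "\<And>a b. 0 < a \<Longrightarrow> a < b \<Longrightarrow> weak_W12_conv a b us u \<and> weak_W12_conv a b fs f"
    and unif: "\<And>a b. 0 < a \<Longrightarrow> a < b \<Longrightarrow>
                 uniform_limit {a..b} us u sequentially \<and> uniform_limit {a..b} fs f sequentially"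
  shows "(f \<longlongrightarrow> 0) (at_right 0)"
proof -
  have al: "\<alpha> > 0" and be: "\<beta> > 0" and ga: "\<gamma> \<ge> 0" using assms(1-3) .
  have conv: "(\<lambda>n. fs n r) \<longlonglongrightarrow> f r" if r: "r > 0" for r
  proof -
    have "uniform_limit {r..r+1} fs f sequentially" using unif[of r "r + 1"] r by simp
    then show ?thesis by (rule tendsto_uniform_limitI) (use r in simp)
  qed
  have fnn: "f r \<ge> 0" if r: "r > 0" for r
    by (rule tendsto_lowerbound[OF conv[OF r]]) (use bounds r in auto)
  have adm0: "(us 0, fs 0) \<in> admissible \<alpha> \<beta> \<gamma>" by (rule inX)
  have "eta0 \<alpha> \<beta> \<gamma> \<le> energy \<alpha> \<beta> \<gamma> (us 0) (fs 0)"
    unfolding eta0_def by (rule Inf_lower) (rule image_eqI[OF _ adm0], simp)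
  moreover have "energy \<alpha> \<beta> \<gamma> (us 0) (fs 0) < \<infinity>" using adm0 unfolding admissible_def by simp
  ultimately have etafin: "eta0 \<alpha> \<beta> \<gamma> < top" by simp
  define B where "B = enn2real (eta0 \<alpha> \<beta> \<gamma>) + 1"
  have "eta0 \<alpha> \<beta> \<gamma> = ennreal (enn2real (eta0 \<alpha> \<beta> \<gamma>))" using etafin by simp
  also have "\<dots> < ennreal B" unfolding B_def by (subst ennreal_less_iff) auto
  finally have etaB: "eta0 \<alpha> \<beta> \<gamma> < ennreal B" .
  have evB: "eventually (\<lambda>n. energy \<alpha> \<beta> \<gamma> (us n) (fs n) < ennreal B) sequentially"
    by (rule order_tendstoD(2)[OF minimizing etaB])
  define M where "M = max B 1"
  have M1: "M \<ge> 1" unfolding M_def by simp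
  show ?thesis
  proof (rule ccontr)
    assume nt: "\<not> ?thesis"
    have "\<exists>\<epsilon>>0. \<forall>\<delta>>0. \<exists>r. 0 < r \<and> r < \<delta> \<and> f r \<ge> \<epsilon>"
    proof (rule ccontr)
      assume H: "\<not> (\<exists>\<epsilon>>0. \<forall>\<delta>>0. \<exists>r. 0 < r \<and> r < \<delta> \<and> f r \<ge> \<epsilon>)"
      have "(f \<longlongrightarrow> 0) (at_right 0)"
        unfolding tendsto_iff eventually_at_right_field
      proof (intro allI impI)
        fix e :: real assume e: "e > 0"
        then obtain d where d: "d > 0" "\<And>r. 0 < r \<Longrightarrow> r < d \<Longrightarrow> f r < e"
          using H by (meson not_le)
        show "\<exists>b>0. \<forall>y>0. y < b \<longrightarrow> dist (f y) 0 < e"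
          using d fnn by (intro exI[of _ d]) (auto simp: dist_real_def)
      qed
      then show False using nt by simp
    qed
    then obtain \<epsilon> where ep: "\<epsilon> > 0" and epH: "\<And>\<delta>. \<delta> > 0 \<Longrightarrow> \<exists>r. 0 < r \<and> r < \<delta> \<and> f r \<ge> \<epsilon>"
      by blast
    define \<rho> where "\<rho> = min 1 (min (1 / (16 * M)) (min (\<epsilon> / (\<gamma> + 1)) (\<beta> * \<epsilon> / (64 * (\<gamma> + 1)))))"
    have g1: "\<gamma> + 1 > 0" using ga by simp
    have r0: "\<rho> > 0" "\<rho> \<le> 1" "16 * M * \<rho> \<le> 1" "(\<gamma> + 1) * \<rho> \<le> \<epsilon>" "64 * ((\<gamma> + 1) * \<rho>) \<le> \<beta> * \<epsilon>"
    proof -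
      show "\<rho> > 0" unfolding \<rho>_def using M1 ep be g1 by auto
      show "\<rho> \<le> 1" unfolding \<rho>_def by simp
      have "\<rho> \<le> 1 / (16 * M)" unfolding \<rho>_def by simp
      then show "16 * M * \<rho> \<le> 1" using M1 by (simp add: le_divide_eq mult.commute)
      have "\<rho> \<le> \<epsilon> / (\<gamma> + 1)" unfolding \<rho>_def by simp
      then show "(\<gamma> + 1) * \<rho> \<le> \<epsilon>" using g1 by (simp add: le_divide_eq mult.commute)
      have "\<rho> \<le> \<beta> * \<epsilon> / (64 * (\<gamma> + 1))" unfolding \<rho>_def by simp
      then show "64 * ((\<gamma> + 1) * \<rho>) \<le> \<beta> * \<epsilon>" using g1 by (simp add: le_divide_eq algebra_simps)
    qed
    define \<delta> where "\<delta> = \<rho> * exp (- (64 / (\<beta> * \<epsilon>))) / 2"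
    have dp: "\<delta> > 0" unfolding \<delta>_def using r0(1) by simp
    obtain a where a: "0 < a" "a < \<delta>" "f a \<ge> \<epsilon>" using epH[OF dp] by blast
    have ev1: "eventually (\<lambda>n. fs n a > \<epsilon> / 2) sequentially"
      by (rule order_tendstoD(1)[OF conv[OF a(1)]]) (use a ep in simp)
    have ev2: "eventually (\<lambda>n. real n > 1 / a) sequentially"
      by (rule filterlim_real_sequentially[THEN filterlim_at_top_dense[THEN iffD1], rule_format])
    obtain n where n1: "fs n a > \<epsilon> / 2" and n2: "real n > 1 / a"
      and n3: "energy \<alpha> \<beta> \<gamma> (us n) (fs n) < ennreal B"
      using eventually_happens'[OF sequentially_bot eventually_conj[OF ev1 eventually_conj[OF ev2 evB]]] by blast
    have "1 / a > 0" using a by simp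
    then have npos: "real n > 0" using n2 by linarith
    then have nge: "n \<ge> 1" by simp
    define p where "p = 1 / real n"
    have pp: "p > 0" unfolding p_def using npos by simp
    have pa: "p < a" unfolding p_def using n2 a(1) npos by (simp add: divide_less_eq mult.commute)
    obtain df where df: "\<forall>r > 1 / real n.
                 (fs n has_real_derivative df r) (at r) \<and>
                 (df has_real_derivative
                    (- 2 / r * df r + \<beta> / r\<^sup>2 * fs n r * (us n r)\<^sup>2
                     + \<gamma> * fs n r * ((fs n r)\<^sup>2 - 1))) (at r)" using ode[OF nge] by blast
    have admn: "(us n, fs n) \<in> admissible \<alpha> \<beta> \<gamma>" by (rule inX)
    then have lu: "loc_AC (us n)" and lf: "loc_AC (fs n)" unfolding admissible_def by auto
    show False
    proof (rule main_single[of p \<beta> \<gamma> "fs n" "us n" df M \<epsilon> \<rho> a])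
      show "p > 0" by (rule pp)
      show "\<beta> > 0" by (rule be)
      show "\<gamma> \<ge> 0" by (rule ga)
      show "fs n p = 0" unfolding p_def by (rule zero_near_0[OF nge]) (use npos in auto)
      show "continuous_on {p..q} (fs n)" if "p \<le> q" for q
        by (rule locAC_cont[OF lf pp that])
      show "continuous_on {x..y} (us n)" if "p < x" "x \<le> y" for x y
        by (rule locAC_cont[OF lu]) (use that pp in auto)
      show "0 \<le> fs n r \<and> fs n r \<le> 1" if "r > p" for r
        using bounds[of r n] that pp by auto
      show "\<forall>r > p. (fs n has_real_derivative df r) (at r) \<and>
                 (df has_real_derivative
                    (- 2 / r * df r + \<beta> / r\<^sup>2 * fs n r * (us n r)\<^sup>2
                     + \<gamma> * fs n r * ((fs n r)\<^sup>2 - 1))) (at r)"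
        using df unfolding p_def .
      show "integral {x..y} (\<lambda>t. (1 - (us n t)\<^sup>2)\<^sup>2 / t\<^sup>2) \<le> M" if xy: "p < x" "x \<le> y" for x y
      proof -
        have x0: "0 < x" using xy pp by linarith
        have "ennreal (integral {x..y} (\<lambda>t. (1 - (us n t)\<^sup>2)\<^sup>2 / t\<^sup>2)) \<le> energy \<alpha> \<beta> \<gamma> (us n) (fs n)"
          by (rule energy_bound[OF al be ga x0 xy(2) locAC_cont[OF lu x0 xy(2)]])
        also have "\<dots> < ennreal B" by (rule n3)
        finally have "ennreal (integral {x..y} (\<lambda>t. (1 - (us n t)\<^sup>2)\<^sup>2 / t\<^sup>2)) < ennreal B" .
        moreover have Bpos: "B > 0" unfolding B_def using enn2real_nonneg[of "eta0 \<alpha> \<beta> \<gamma>"] by linarith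
        ultimately have "integral {x..y} (\<lambda>t. (1 - (us n t)\<^sup>2)\<^sup>2 / t\<^sup>2) < B"
          by (cases "integral {x..y} (\<lambda>t. (1 - (us n t)\<^sup>2)\<^sup>2 / t\<^sup>2) \<ge> 0")
             (simp_all add: ennreal_less_iff)
        then show ?thesis unfolding M_def by simp
      qed
      show "M \<ge> 1" by (rule M1)
      show "\<epsilon> > 0" by (rule ep)
      show "\<rho> > 0" "\<rho> \<le> 1" "16 * M * \<rho> \<le> 1" "(\<gamma> + 1) * \<rho> \<le> \<epsilon>" "64 * ((\<gamma> + 1) * \<rho>) \<le> \<beta> * \<epsilon>"
        by (rule r0)+
      show "p < a" by (rule pa)
      show "a < \<rho> * exp (- (64 / (\<beta> * \<epsilon>))) / 2" using a(2) unfolding \<delta>_def .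
      show "fs n a \<ge> \<epsilon> / 2" using n1 by simp
    qed
  qed
qed

end
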